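(* Let $S$ be a finite set of distinct lines in the plane, each having one of three distinct slopes, such that no point lies on three lines of $S$. Let $x\ge y\ge z$ be the numbers of lines of $S$ in the three slope classes. Consider the following greedy algorithm: while there exists a point at which two not-yet-hit lines of $S$ cross, choose such a point whose two lines belong to the two slope classes currently having the largest numbers of unhit lines, and mark these two lines as hit; afterwards, place one point on each remaining unhit line. This algorithm produces a minimum-cardinality hitting set for $S$, and the minimum number of points in a hitting set for $S$ is $$OPT_2(x,y,z)=\begin{cases} x & \text{if } x\ge y+z,\\ \lceil (x+y+z)/2\rceil & \text{if } x<y+z.\end{cases}$$
   Context: A hitting set for a set of lines is a finite set of points such that every line contains at least one of the points. *)

theory Defs
  imports Complex_Main
begin

type_synonym point = "real \<times> real"

definition is_line :: "point set \<Rightarrow> bool" where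
  "is_line L \<longleftrightarrow> (\<exists>a b c. (a, b) \<noteq> (0, 0) \<and> L = {(x, y). a * x + b * y = c})"

text \<open>The slope (direction) of a line: the set of difference vectors of its points.
  Two lines have the same slope iff they have the same direction.\<close>
definition dir :: "point set \<Rightarrow> point set" where
  "dir L = {(fst p - fst q, snd p - snd q) | p q. p \<in> L \<and> q \<in> L}"

definition hitting_set :: "point set \<Rightarrow> point set set \<Rightarrow> bool" where
  "hitting_set H S \<longleftrightarrow> finite H \<and> (\<forall>L\<in>S. H \<inter> L \<noteq> {})"

definition cnt :: "point set set \<Rightarrow> point set \<Rightarrow> nat" where
  "cnt U D = card {L \<in> U. dir L = D}"

definition OPT2 :: "nat \<Rightarrow> nat \<Rightarrow> nat \<Rightarrow> nat" where
  "OPT2 x y z = (if x \<ge> y + z then x else nat \<lceil>real (x + y + z) / 2\<rceil>)"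

text \<open>Runs of the (nondeterministic) greedy algorithm on the line set S.
  greedy_run S U H Out: starting with unhit lines U and chosen points H, the algorithm
  can terminate with output Out.  In a step, a crossing point p of two unhit lines L1, L2
  is chosen whose slope classes are the two classes with the largest numbers of unhit
  lines (ties broken arbitrarily), i.e. every other slope class has at most as many unhit
  lines as each of them.\<close>
inductive greedy_run :: "point set set \<Rightarrow> point set set \<Rightarrow> point set \<Rightarrow> point set \<Rightarrow> bool"
  for S :: "point set set" where
  finish: "\<not> (\<exists>p L1 L2. L1 \<in> U \<and> L2 \<in> U \<and> L1 \<noteq> L2 \<and> p \<in> L1 \<and> p \<in> L2) \<Longrightarrow>
           (\<forall>L\<in>U. f L \<in> L) \<Longrightarrow> greedy_run S U H (H \<union> f ` U)"
| step: "L1 \<in> U \<Longrightarrow> L2 \<in> U \<Longrightarrow> L1 \<noteq> L2 \<Longrightarrow> p \<in> L1 \<Longrightarrow> p \<in> L2 \<Longrightarrow>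
         (\<forall>D\<in>dir ` S. D \<noteq> dir L1 \<longrightarrow> D \<noteq> dir L2 \<longrightarrow>
              cnt U D \<le> cnt U (dir L1) \<and> cnt U D \<le> cnt U (dir L2)) \<Longrightarrow>
         greedy_run S (U - {L1, L2}) (insert p H) Out \<Longrightarrow> greedy_run S U H Out"

end

theory Submission
  imports Defs
begin


lemma dir_eq:
  assumes ab: "(a, b) \<noteq> ((0::real), (0::real))" and L: "L = {(x, y). a * x + b * y = c}"
  shows "dir L = {(u, v). a * u + b * v = 0}"
proof
  show "dir L \<subseteq> {(u, v). a * u + b * v = 0}"
    unfolding dir_def L by (auto simp: algebra_simps)
next
  obtain p where p: "p \<in> L"
  proof (cases "a = 0")
    case True
    then have "b \<noteq> 0" using ab by auto
    then show ?thesis using that[of "(0, c / b)"] True L by auto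
  next
    case False
    then show ?thesis using that[of "(c / a, 0)"] L by auto
  qed
  show "{(u, v). a * u + b * v = 0} \<subseteq> dir L"
  proof clarify
    fix u v assume uv: "a * u + b * v = 0"
    have "(fst p + u, snd p + v) \<in> L" using p uv L by (auto simp: algebra_simps)
    then show "(u, v) \<in> dir L" unfolding dir_def using p
      by (intro CollectI exI[of _ "(fst p + u, snd p + v)"] exI[of _ p]) auto
  qed
qed

lemma line_nonempty:
  assumes "is_line L" shows "\<exists>p. p \<in> L"
proof -
  obtain a b c where ab: "(a, b) \<noteq> ((0::real), (0::real))" and L: "L = {(x, y). a * x + b * y = c}"
    using assms(1) unfolding is_line_def by blast
  show ?thesis
  proof (cases "a = 0")
    case True
    then have "b \<noteq> 0" using ab by auto
    then show ?thesis using True L by (intro exI[of _ "(0, c / b)"]) auto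
  next
    case False
    then show ?thesis using L by (intro exI[of _ "(c / a, 0)"]) auto
  qed
qed

lemma line_mem_iff:
  assumes "is_line L" "p \<in> L"
  shows "q \<in> L \<longleftrightarrow> (fst q - fst p, snd q - snd p) \<in> dir L"
proof -
  obtain a b c where ab: "(a, b) \<noteq> ((0::real), (0::real))" and L: "L = {(x, y). a * x + b * y = c}"
    using assms(1) unfolding is_line_def by blast
  have d: "dir L = {(u, v). a * u + b * v = 0}" by (rule dir_eq[OF ab L])
  have pL: "a * fst p + b * snd p = c" using assms(2) L by (cases p) auto
  have "q \<in> L \<longleftrightarrow> a * fst q + b * snd q = c" using L by (cases q) auto
  also have "\<dots> \<longleftrightarrow> a * (fst q - fst p) + b * (snd q - snd p) = 0" using pL by (auto simp: algebra_simps)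
  also have "\<dots> \<longleftrightarrow> (fst q - fst p, snd q - snd p) \<in> dir L" unfolding d by auto
  finally show ?thesis .
qed

lemma lineA:
  assumes "is_line L" "is_line L'" "dir L = dir L'" "p \<in> L" "p \<in> L'"
  shows "L = L'"
  using line_mem_iff[OF assms(1,4)] line_mem_iff[OF assms(2,5)] assms(3) by blast

lemma lineB:
  assumes "is_line L" "is_line L'" "dir L \<noteq> dir L'"
  shows "\<exists>p. p \<in> L \<and> p \<in> L'"
proof -
  obtain a b c where ab: "(a, b) \<noteq> ((0::real), (0::real))" and L: "L = {(x, y). a * x + b * y = c}"
    using assms(1) unfolding is_line_def by blast
  obtain a' b' c' where ab': "(a', b') \<noteq> ((0::real), (0::real))" and L': "L' = {(x, y). a' * x + b' * y = c'}"
    using assms(2) unfolding is_line_def by blast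
  have d: "dir L = {(u, v). a * u + b * v = 0}" by (rule dir_eq[OF ab L])
  have d': "dir L' = {(u, v). a' * u + b' * v = 0}" by (rule dir_eq[OF ab' L'])
  show ?thesis
  proof (cases "a * b' - a' * b = 0")
    case True
    have "dir L \<subseteq> dir L'"
    proof clarify
      fix u v assume "(u, v) \<in> dir L"
      then have uv: "a * u + b * v = 0" using d by auto
      have 1: "a * (a' * u + b' * v) = 0" using uv True by algebra
      have 2: "b * (a' * u + b' * v) = 0" using uv True by algebra
      have "a' * u + b' * v = 0" using 1 2 ab by auto
      then show "(u, v) \<in> dir L'" using d' by auto
    qed
    moreover have "dir L' \<subseteq> dir L"
    proof clarify
      fix u v assume "(u, v) \<in> dir L'"
      then have uv: "a' * u + b' * v = 0" using d' by auto
      have 1: "a' * (a * u + b * v) = 0" using uv True by algebra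
      have 2: "b' * (a * u + b * v) = 0" using uv True by algebra
      have "a * u + b * v = 0" using 1 2 ab' by auto
      then show "(u, v) \<in> dir L" using d by auto
    qed
    ultimately show ?thesis using assms(3) by blast
  next
    case False
    define x where "x = (c * b' - c' * b) / (a * b' - a' * b)"
    define y where "y = (a * c' - a' * c) / (a * b' - a' * b)"
    have n1: "a*(c*b'-c'*b) + b*(a*c'-a'*c) = c*(a*b'-a'*b)" by algebra
    have n2: "a'*(c*b'-c'*b) + b'*(a*c'-a'*c) = c'*(a*b'-a'*b)" by algebra
    have "a * x + b * y = (a*(c*b'-c'*b) + b*(a*c'-a'*c)) / (a*b'-a'*b)"
      unfolding x_def y_def by (simp add: add_divide_distrib)
    also have "\<dots> = c" using False n1 by simp
    finally have "a * x + b * y = c" .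
    moreover have "a' * x + b' * y = (a'*(c*b'-c'*b) + b'*(a*c'-a'*c)) / (a*b'-a'*b)"
      unfolding x_def y_def by (simp add: add_divide_distrib)
    moreover have "\<dots> = c'" using False n2 by simp
    ultimately show ?thesis using L L' by auto
  qed
qed



definition g :: "nat \<Rightarrow> nat \<Rightarrow> nat \<Rightarrow> nat" where
  "g a b c = max a (max b (max c ((a + b + c + 1) div 2)))"

lemma OPT2_g: "x \<ge> y \<Longrightarrow> y \<ge> z \<Longrightarrow> OPT2 x y z = g x y z"
proof -
  assume "x \<ge> y" "y \<ge> z"
  have c: "nat \<lceil>real n / 2\<rceil> = (n + 1) div 2" for n :: nat
  proof (cases "even n")
    case True
    then obtain k where "n = 2 * k" by blast
    then show ?thesis by simp
  next
    case False
    then obtain k where k: "n = 2 * k + 1" using oddE by blast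
    have "\<lceil>real n / 2\<rceil> = int k + 1" unfolding k
      by (simp add: ceiling_eq_iff)
    then show ?thesis using k by simp
  qed
  show ?thesis unfolding OPT2_def g_def c using \<open>x \<ge> y\<close> \<open>y \<ge> z\<close> by auto
qed

lemma g_step1: "a \<ge> 1 \<Longrightarrow> b \<ge> 1 \<Longrightarrow> c \<le> a \<Longrightarrow> c \<le> b \<Longrightarrow> g (a - 1) (b - 1) c + 1 = g a b c"
proof -
  assume h: "a \<ge> 1" "b \<ge> 1" "c \<le> a" "c \<le> b"
  have e: "(a - 1 + (b - 1) + c + 1) div 2 = (a + b + c + 1) div 2 - 1"
    "(a + b + c + 1) div 2 \<ge> 1" using h by linarith+
  have f: "2 * ((a + b + c + 1) div 2) \<le> a + b + c + 1" "a + b + c \<le> 2 * ((a + b + c + 1) div 2)" by linarith+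
  obtain m where m: "m = (a + b + c + 1) div 2" by blast
  have "max (a - 1) (max (b - 1) (max c (m - 1))) + 1 = max a (max b (max c m))"
    using h f e(2) unfolding m[symmetric] max_def by (split if_split)+ linarith
  then show ?thesis unfolding g_def e m[symmetric] .
qed

lemma g_sym1: "g a b c = g b a c" unfolding g_def by (simp add: ac_simps max.left_commute)
lemma g_sym2: "g a b c = g a c b" unfolding g_def by (simp add: ac_simps max.left_commute)

lemma g_one: "(a = 0 \<or> b = 0) \<Longrightarrow> (a = 0 \<or> c = 0) \<Longrightarrow> (b = 0 \<or> c = 0) \<Longrightarrow> g a b c = a + b + c"
  unfolding g_def by auto



lemma g_step12: "a \<ge> 1 \<Longrightarrow> b \<ge> 1 \<Longrightarrow> c \<le> a \<Longrightarrow> c \<le> b \<Longrightarrow> g (a - 1) (b - 1) c + 1 = g a b c"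
  by (rule g_step1)
lemma g_step13: "a \<ge> 1 \<Longrightarrow> c \<ge> 1 \<Longrightarrow> b \<le> a \<Longrightarrow> b \<le> c \<Longrightarrow> g (a - 1) b (c - 1) + 1 = g a b c"
  using g_step1[of a c b] by (simp add: g_sym2)
lemma g_step23: "b \<ge> 1 \<Longrightarrow> c \<ge> 1 \<Longrightarrow> a \<le> b \<Longrightarrow> a \<le> c \<Longrightarrow> g a (b - 1) (c - 1) + 1 = g a b c"
  using g_step1[of b c a] g_sym1[of a "b-1" "c-1"] g_sym2[of "b-1" a "c-1"] g_sym1[of a b c] g_sym2[of b a c] by simp

locale cfg =
  fixes S :: "point set set" and D1 D2 D3 :: "point set"
  assumes fin: "finite S"
    and lines: "\<forall>L\<in>S. is_line L"
    and d12: "D1 \<noteq> D2" and d13: "D1 \<noteq> D3" and d23: "D2 \<noteq> D3"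
    and dirs: "\<forall>L\<in>S. dir L \<in> {D1, D2, D3}"
    and two: "\<forall>p. card {L \<in> S. p \<in> L} \<le> 2"
begin

lemma cross_diff: "L1 \<in> S \<Longrightarrow> L2 \<in> S \<Longrightarrow> L1 \<noteq> L2 \<Longrightarrow> p \<in> L1 \<Longrightarrow> p \<in> L2 \<Longrightarrow> dir L1 \<noteq> dir L2"
  using lineA lines by blast

lemma diff_cross: "L1 \<in> S \<Longrightarrow> L2 \<in> S \<Longrightarrow> dir L1 \<noteq> dir L2 \<Longrightarrow> \<exists>p. p \<in> L1 \<and> p \<in> L2"
  using lineB lines by blast

lemma three: "L1 \<in> S \<Longrightarrow> L2 \<in> S \<Longrightarrow> L \<in> S \<Longrightarrow> L1 \<noteq> L2 \<Longrightarrow> L \<noteq> L1 \<Longrightarrow> L \<noteq> L2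
   \<Longrightarrow> p \<in> L1 \<Longrightarrow> p \<in> L2 \<Longrightarrow> p \<notin> L"
proof
  assume h: "L1 \<in> S" "L2 \<in> S" "L \<in> S" "L1 \<noteq> L2" "L \<noteq> L1" "L \<noteq> L2" "p \<in> L1" "p \<in> L2" "p \<in> L"
  have "{L1, L2, L} \<subseteq> {L \<in> S. p \<in> L}" using h by auto
  then have "card {L1, L2, L} \<le> card {L \<in> S. p \<in> L}" using fin by (intro card_mono) auto
  moreover have "card {L1, L2, L} = 3" using h by auto
  ultimately show False using spec[OF two, of p] by linarith
qed

lemma cnt_remove: "finite U \<Longrightarrow> L \<in> U \<Longrightarrow> cnt (U - {L}) D = (if dir L = D then cnt U D - 1 else cnt U D)"
proof -
  assume "finite U" "L \<in> U"
  have e: "{L' \<in> U - {L}. dir L' = D} = {L' \<in> U. dir L' = D} - {L}" by auto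
  show ?thesis unfolding cnt_def e using \<open>finite U\<close> \<open>L \<in> U\<close> by auto
qed

lemma cnt_pos: "L \<in> U \<Longrightarrow> finite U \<Longrightarrow> cnt U (dir L) \<ge> 1"
proof -
  assume "L \<in> U" "finite U"
  then have "card {L' \<in> U. dir L' = dir L} \<noteq> 0" by auto
  then show ?thesis unfolding cnt_def by linarith
qed

lemma cnt_sum: "U \<subseteq> S \<Longrightarrow> card U = cnt U D1 + cnt U D2 + cnt U D3"
proof -
  assume U: "U \<subseteq> S"
  have fU: "finite U" using U fin finite_subset by blast
  have e: "U = {L \<in> U. dir L = D1} \<union> {L \<in> U. dir L = D2} \<union> {L \<in> U. dir L = D3}"
    using U dirs by auto
  have "card U = card ({L \<in> U. dir L = D1} \<union> {L \<in> U. dir L = D2} \<union> {L \<in> U. dir L = D3})"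
    using e by simp
  also have "\<dots> = card ({L \<in> U. dir L = D1} \<union> {L \<in> U. dir L = D2}) + card {L \<in> U. dir L = D3}"
    using fU d13 d23 by (intro card_Un_disjoint) auto
  also have "\<dots> = cnt U D1 + cnt U D2 + cnt U D3"
    unfolding cnt_def using fU d12 by (subst card_Un_disjoint) auto
  finally show ?thesis .
qed

lemma cnt_nonempty: "cnt U D \<noteq> 0 \<Longrightarrow> finite U \<Longrightarrow> \<exists>L\<in>U. dir L = D"
proof -
  assume "cnt U D \<noteq> 0"
  then have "{L \<in> U. dir L = D} \<noteq> {}" unfolding cnt_def by (metis card.empty)
  then show ?thesis by blast
qed


lemma correct:
  assumes "greedy_run S U H Out" "U \<subseteq> S" "finite H" "\<forall>L\<in>S-U. H \<inter> L \<noteq> {}" "\<forall>L\<in>U. H \<inter> L = {}"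
  shows "hitting_set Out S \<and> card Out = card H + g (cnt U D1) (cnt U D2) (cnt U D3)"
  using assms
proof (induction rule: greedy_run.induct)
  case (finish U f H)
  have fU: "finite U" using finish.prems fin finite_subset by blast
  have disj: "L \<inter> L' = {}" if "L \<in> U" "L' \<in> U" "L \<noteq> L'" for L L'
    using finish.hyps(1) that by blast
  have inj: "inj_on f U"
  proof (rule inj_onI)
    fix L L' assume "L \<in> U" "L' \<in> U" "f L = f L'"
    then show "L = L'" using disj finish.hyps(2) by (metis IntI empty_iff)
  qed
  have hd: "H \<inter> f ` U = {}" using finish.hyps(2) finish.prems(4) by blast
  have "card (H \<union> f ` U) = card H + card U"
    using card_Un_disjoint[OF finish.prems(2) finite_imageI[OF fU] hd] card_image[OF inj] by simp
  moreover have "g (cnt U D1) (cnt U D2) (cnt U D3) = card U"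
  proof -
    have z: "cnt U Di = 0 \<or> cnt U Dj = 0" if ne: "Di \<noteq> Dj" for Di Dj
    proof (rule ccontr)
      assume "\<not> (cnt U Di = 0 \<or> cnt U Dj = 0)"
      then have "cnt U Di \<noteq> 0" "cnt U Dj \<noteq> 0" by auto
      then obtain L L' where L: "L \<in> U" "dir L = Di" "L' \<in> U" "dir L' = Dj"
        using cnt_nonempty[OF _ fU] by meson
      then have "L \<noteq> L'" using ne by auto
      moreover have "L \<in> S" "L' \<in> S" using L finish.prems(1) by auto
      then obtain p where "p \<in> L" "p \<in> L'" using diff_cross[of L L'] L ne by auto
      ultimately show False using finish.hyps(1) L by blast
    qed
    show ?thesis using g_one[OF z[OF d12] z[OF d13] z[OF d23]] cnt_sum[OF finish.prems(1)] by simp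
  qed
  moreover have "hitting_set (H \<union> f ` U) S"
    unfolding hitting_set_def using finish.prems(2,3) finish.hyps(2) fU by blast
  ultimately show ?case by simp
next
  case (step L1 U L2 p H Out)
  have fU: "finite U" using step.prems fin finite_subset by blast
  have S12: "L1 \<in> S" "L2 \<in> S" using step.hyps(1,2) step.prems(1) by auto
  have dd: "dir L1 \<noteq> dir L2" using cross_diff[OF S12 step.hyps(3,4,5)] .
  have pH: "p \<notin> H" using step.prems(4) step.hyps(1,4) by blast
  have IH: "hitting_set Out S \<and> card Out = card (insert p H) + g (cnt (U - {L1, L2}) D1) (cnt (U - {L1, L2}) D2) (cnt (U - {L1, L2}) D3)"
  proof (rule step.IH)
    show "U - {L1, L2} \<subseteq> S" using step.prems(1) by auto
    show "finite (insert p H)" using step.prems(2) by simp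
    show "\<forall>L\<in>S - (U - {L1, L2}). insert p H \<inter> L \<noteq> {}" using step.prems(3) step.hyps(4,5) by auto
    show "\<forall>L\<in>U - {L1, L2}. insert p H \<inter> L = {}"
    proof
      fix L assume L: "L \<in> U - {L1, L2}"
      have "p \<notin> L" using three[OF S12, of L p] L step.hyps(3,4,5) step.prems(1) by auto
      then show "insert p H \<inter> L = {}" using L step.prems(4) by auto
    qed
  qed
  have e: "U - {L1, L2} = (U - {L1}) - {L2}" by auto
  have c: "cnt (U - {L1, L2}) D = (if dir L2 = D then (if dir L1 = D then cnt U D - 1 else cnt U D) - 1 else (if dir L1 = D then cnt U D - 1 else cnt U D))" for D
  proof -
    have "L2 \<in> U - {L1}" using step.hyps(2,3) by auto
    then show ?thesis unfolding e using cnt_remove[of "U - {L1}" L2 D] cnt_remove[OF fU step.hyps(1), of D] fU by simp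
  qed
  have p1: "cnt U (dir L1) \<ge> 1" "cnt U (dir L2) \<ge> 1" using cnt_pos fU step.hyps(1,2) by auto
  have cond: "cnt U D \<le> cnt U (dir L1) \<and> cnt U D \<le> cnt U (dir L2)" if "D \<noteq> dir L1" "D \<noteq> dir L2" for D
  proof (cases "D \<in> dir ` S")
    case True then show ?thesis using step.hyps(6) that by blast
  next
    case False
    then have e0: "{L \<in> U. dir L = D} = {}" using step.prems(1) by auto
    have "cnt U D = 0" unfolding cnt_def by (simp only: e0 card.empty)
    then show ?thesis by simp
  qed
  have d1: "dir L1 \<in> {D1, D2, D3}" and d2: "dir L2 \<in> {D1, D2, D3}" using dirs S12 by auto
  let ?c = "cnt (U - {L1, L2})"
  have ar: "g (?c D1) (?c D2) (?c D3) + 1 = g (cnt U D1) (cnt U D2) (cnt U D3)"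
  proof -
    consider "dir L1 = D1" "dir L2 = D2" | "dir L1 = D2" "dir L2 = D1"
      | "dir L1 = D1" "dir L2 = D3" | "dir L1 = D3" "dir L2 = D1"
      | "dir L1 = D2" "dir L2 = D3" | "dir L1 = D3" "dir L2 = D2"
      using d1 d2 dd by auto
    then show ?thesis
    proof cases
      case 1
      then have "?c D1 = cnt U D1 - 1" "?c D2 = cnt U D2 - 1" "?c D3 = cnt U D3"
        using d12 d13 d23 by (simp_all add: c)
      then show ?thesis using g_step12 p1 cond[of D3] 1 d13 d23 by simp
    next
      case 2
      then have "?c D1 = cnt U D1 - 1" "?c D2 = cnt U D2 - 1" "?c D3 = cnt U D3"
        using d12 d13 d23 by (simp_all add: c)
      then show ?thesis using g_step12 p1 cond[of D3] 2 d13 d23 by simp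
    next
      case 3
      then have "?c D1 = cnt U D1 - 1" "?c D3 = cnt U D3 - 1" "?c D2 = cnt U D2"
        using d12 d13 d23 by (simp_all add: c)
      then show ?thesis using g_step13 p1 cond[of D2] 3 d12 d23 by simp
    next
      case 4
      then have "?c D1 = cnt U D1 - 1" "?c D3 = cnt U D3 - 1" "?c D2 = cnt U D2"
        using d12 d13 d23 by (simp_all add: c)
      then show ?thesis using g_step13 p1 cond[of D2] 4 d12 d23 by simp
    next
      case 5
      then have "?c D2 = cnt U D2 - 1" "?c D3 = cnt U D3 - 1" "?c D1 = cnt U D1"
        using d12 d13 d23 by (simp_all add: c)
      then show ?thesis using g_step23 p1 cond[of D1] 5 d12 d13 by simp
    next
      case 6
      then have "?c D2 = cnt U D2 - 1" "?c D3 = cnt U D3 - 1" "?c D1 = cnt U D1"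
        using d12 d13 d23 by (simp_all add: c)
      then show ?thesis using g_step23 p1 cond[of D1] 6 d12 d13 by simp
    qed
  qed
  show ?case using IH ar pH step.prems(2) by simp
qed


lemma exists_run: "U \<subseteq> S \<Longrightarrow> \<exists>Out. greedy_run S U H Out"
proof (induction "card U" arbitrary: U H rule: less_induct)
  case less
  have fU: "finite U" using less.prems fin finite_subset by blast
  show ?case
  proof (cases "\<exists>p L1 L2. L1 \<in> U \<and> L2 \<in> U \<and> L1 \<noteq> L2 \<and> p \<in> L1 \<and> p \<in> L2")
    case False
    define f where "f L = (SOME p. p \<in> L)" for L :: "point set"
    have "\<forall>L\<in>U. f L \<in> L"
    proof
      fix L assume "L \<in> U"
      then have "\<exists>p. p \<in> L" using line_nonempty lines less.prems by blast
      then show "f L \<in> L" unfolding f_def by (rule someI_ex)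
    qed
    then show ?thesis using greedy_run.finish[OF False] by blast
  next
    case True
    then obtain p L1 L2 where pl: "L1 \<in> U" "L2 \<in> U" "L1 \<noteq> L2" "p \<in> L1" "p \<in> L2" by blast
    have S12: "L1 \<in> S" "L2 \<in> S" using pl less.prems by auto
    have dd: "dir L1 \<noteq> dir L2" using cross_diff[OF S12 pl(3,4,5)] .
    have p1: "cnt U (dir L1) \<ge> 1" "cnt U (dir L2) \<ge> 1" using cnt_pos fU pl by auto
    have d1: "dir L1 \<in> {D1, D2, D3}" and d2: "dir L2 \<in> {D1, D2, D3}" using dirs S12 by auto
    have N: "(cnt U D1 \<noteq> 0 \<and> cnt U D2 \<noteq> 0) \<or> (cnt U D1 \<noteq> 0 \<and> cnt U D3 \<noteq> 0) \<or> (cnt U D2 \<noteq> 0 \<and> cnt U D3 \<noteq> 0)"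
      using d1 d2 dd p1 by auto
    have "\<exists>Di Dj. Di \<in> {D1, D2, D3} \<and> Dj \<in> {D1, D2, D3} \<and> Di \<noteq> Dj \<and> cnt U Di \<noteq> 0 \<and> cnt U Dj \<noteq> 0 \<and>
      (\<forall>D\<in>{D1, D2, D3}. D \<noteq> Di \<longrightarrow> D \<noteq> Dj \<longrightarrow> cnt U D \<le> cnt U Di \<and> cnt U D \<le> cnt U Dj)"
    proof (cases "cnt U D3 \<le> cnt U D1 \<and> cnt U D3 \<le> cnt U D2")
      case True
      then show ?thesis using N d12 d13 d23 by (intro exI[of _ D1] exI[of _ D2]) auto
    next
      case F1: False
      show ?thesis
      proof (cases "cnt U D2 \<le> cnt U D1 \<and> cnt U D2 \<le> cnt U D3")
        case True
        then show ?thesis using N d12 d13 d23 by (intro exI[of _ D1] exI[of _ D3]) auto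
      next
        case False
        then show ?thesis using F1 N d12 d13 d23 by (intro exI[of _ D2] exI[of _ D3]) auto
      qed
    qed
    then obtain Di Dj where DD: "Di \<in> {D1, D2, D3}" "Dj \<in> {D1, D2, D3}" "Di \<noteq> Dj" "cnt U Di \<noteq> 0" "cnt U Dj \<noteq> 0"
      and cmp: "\<forall>D\<in>{D1, D2, D3}. D \<noteq> Di \<longrightarrow> D \<noteq> Dj \<longrightarrow> cnt U D \<le> cnt U Di \<and> cnt U D \<le> cnt U Dj"
      by blast
    obtain M1 where M1: "M1 \<in> U" "dir M1 = Di" using cnt_nonempty[OF DD(4) fU] by blast
    obtain M2 where M2: "M2 \<in> U" "dir M2 = Dj" using cnt_nonempty[OF DD(5) fU] by blast
    have SM: "M1 \<in> S" "M2 \<in> S" using M1 M2 less.prems by auto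
    obtain q where q: "q \<in> M1" "q \<in> M2" using diff_cross[OF SM] M1 M2 DD(3) by auto
    have neq: "M1 \<noteq> M2" using M1 M2 DD(3) by auto
    have cond: "\<forall>D\<in>dir ` S. D \<noteq> dir M1 \<longrightarrow> D \<noteq> dir M2 \<longrightarrow> cnt U D \<le> cnt U (dir M1) \<and> cnt U D \<le> cnt U (dir M2)"
      using cmp dirs M1 M2 by auto
    have "card (U - {M1, M2}) < card U" using fU M1 M2 by (intro psubset_card_mono) auto
    then obtain Out where "greedy_run S (U - {M1, M2}) (insert q H) Out"
      using less.hyps[of "U - {M1, M2}" "insert q H"] less.prems by blast
    then show ?thesis using greedy_run.step[OF M1(1) M2(1) neq q cond] by blast
  qed
qed

lemma lower:
  assumes "hitting_set H S"
  shows "g (cnt S D1) (cnt S D2) (cnt S D3) \<le> card H"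
proof -
  have fH: "finite H" and hit: "\<forall>L\<in>S. H \<inter> L \<noteq> {}" using assms unfolding hitting_set_def by auto
  define h where "h L = (SOME p. p \<in> H \<inter> L)" for L :: "point set"
  have hL: "h L \<in> H \<inter> L" if "L \<in> S" for L
  proof -
    have "\<exists>p. p \<in> H \<inter> L" using hit that by blast
    then show ?thesis unfolding h_def by (rule someI_ex)
  qed
  have cl: "cnt S D \<le> card H" for D
  proof -
    have "inj_on h {L \<in> S. dir L = D}"
    proof (rule inj_onI)
      fix L L' assume "L \<in> {L \<in> S. dir L = D}" "L' \<in> {L \<in> S. dir L = D}" "h L = h L'"
      then have a: "L \<in> S" "L' \<in> S" "dir L = dir L'" "h L \<in> L" "h L \<in> L'" using hL[of L] hL[of L'] by auto
      show "L = L'" using lineA[OF _ _ a(3,4,5)] lines a(1,2) by blast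
    qed
    moreover have "h ` {L \<in> S. dir L = D} \<subseteq> H" using hL by auto
    ultimately show ?thesis unfolding cnt_def using card_inj_on_le fH by blast
  qed
  have "S \<subseteq> (\<Union>p\<in>H. {L \<in> S. p \<in> L})" using hit by auto
  then have "card S \<le> card (\<Union>p\<in>H. {L \<in> S. p \<in> L})"
    using fH fin by (intro card_mono) auto
  also have "\<dots> \<le> (\<Sum>p\<in>H. card {L \<in> S. p \<in> L})" using fH fin by (intro card_UN_le) auto
  also have "\<dots> \<le> (\<Sum>p\<in>H. (2::nat))" using two by (intro sum_mono) auto
  also have "\<dots> = card H * 2" by simp
  finally have "card S \<le> 2 * card H" by simp
  then have "cnt S D1 + cnt S D2 + cnt S D3 \<le> 2 * card H" using cnt_sum by simp
  then have "(cnt S D1 + cnt S D2 + cnt S D3 + 1) div 2 \<le> card H" by linarith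
  then show ?thesis unfolding g_def using cl[of D1] cl[of D2] cl[of D3] by simp
qed

end


theorem mainTheorem3:
  fixes S :: "point set set" and D1 D2 D3 :: "point set" and x y z :: nat
  assumes "finite S"
    and "\<forall>L\<in>S. is_line L"
    and "D1 \<noteq> D2" and "D1 \<noteq> D3" and "D2 \<noteq> D3"
    and "\<forall>L\<in>S. dir L \<in> {D1, D2, D3}"
    and "\<forall>p. card {L \<in> S. p \<in> L} \<le> 2"
    and "x = cnt S D1" and "y = cnt S D2" and "z = cnt S D3"
    and "x \<ge> y" and "y \<ge> z"
  shows "(\<exists>H. hitting_set H S \<and> card H = OPT2 x y z)
       \<and> (\<forall>H. hitting_set H S \<longrightarrow> OPT2 x y z \<le> card H)
       \<and> (\<exists>Out. greedy_run S S {} Out)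
       \<and> (\<forall>Out. greedy_run S S {} Out \<longrightarrow> hitting_set Out S \<and> card Out = OPT2 x y z)"
proof -
  interpret cfg S D1 D2 D3 using assms(1-7) by unfold_locales
  have opt: "OPT2 x y z = g (cnt S D1) (cnt S D2) (cnt S D3)"
    using OPT2_g[OF assms(11,12)] assms(8-10) by simp
  have corr: "\<forall>Out. greedy_run S S {} Out \<longrightarrow> hitting_set Out S \<and> card Out = OPT2 x y z"
  proof (intro allI impI)
    fix Out assume "greedy_run S S {} Out"
    from correct[OF this] show "hitting_set Out S \<and> card Out = OPT2 x y z" using opt by simp
  qed
  obtain Out where run: "greedy_run S S {} Out" using exists_run by blast
  have low: "\<forall>H. hitting_set H S \<longrightarrow> OPT2 x y z \<le> card H" using lower opt by simp
  show ?thesis using corr run low by blast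
qed

end
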